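(* For any monotone total order $T$ on $\Omega$ and any homogeneous sample $\mathbf{S}_k = (S_k,\dots,S_k) \in \Omega$, $$\Omega(\mathbf{S}_k, T_\ell) \subseteq \Omega(\mathbf{S}_k, T) \subseteq \Omega(\mathbf{S}_k, T_h).$$
   Context: Let $S \subset \mathbb{R}$ be a finite set and $\Omega$ the set of samples of size $n$ with entries in $S$, identified with their sorted versions $x_{(1)} \le \dots \le x_{(n)}$. For $\mathbf{x},\mathbf{y} \in \Omega$ write $\mathbf{x} \le \mathbf{y}$ if $x_{(j)} \le y_{(j)}$ for all $j$. A total order $T$ on $\Omega$ is monotone if $\mathbf{x} \le \mathbf{y}$ implies $\mathbf{x} \le_T \mathbf{y}$. For a total order $T$, the upper set is $\Omega(\mathbf{x},T) = \{\mathbf{y} \in \Omega : \mathbf{x} \le_T \mathbf{y}\}$. The low lexicographic order $T_\ell$: $\mathbf{x} \le_{T_\ell} \mathbf{y}$ iff $\mathbf{x} = \mathbf{y}$ or, for the smallest index $j$ with $x_{(j)} \ne y_{(j)}$, $x_{(j)} < y_{(j)}$. The high lexicographic order $T_h$: same but with the largest such index $j$. *)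

theory Defs
  imports Main "HOL.Real"
begin

text \<open>Samples of size n with entries in S, identified with their sorted versions
  (sorted lists; x ! j is the (j+1)-th order statistic).\<close>
definition samples :: "real set \<Rightarrow> nat \<Rightarrow> real list set" where
  "samples S n = {xs. length xs = n \<and> sorted xs \<and> set xs \<subseteq> S}"

definition sample_le :: "real list \<Rightarrow> real list \<Rightarrow> bool" where
  "sample_le x y \<longleftrightarrow> length x = length y \<and> (\<forall>j<length x. x ! j \<le> y ! j)"

definition monotone_order :: "real list set \<Rightarrow> (real list \<times> real list) set \<Rightarrow> bool" where
  "monotone_order \<Omega> T \<longleftrightarrow> (\<forall>x\<in>\<Omega>. \<forall>y\<in>\<Omega>. sample_le x y \<longrightarrow> (x, y) \<in> T)"

definition upper_set :: "real list set \<Rightarrow> real list \<Rightarrow> (real list \<times> real list) set \<Rightarrow> real list set" where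
  "upper_set \<Omega> x T = {y\<in>\<Omega>. (x, y) \<in> T}"

definition low_lex :: "real list set \<Rightarrow> (real list \<times> real list) set" where
  "low_lex \<Omega> = {(x, y). x \<in> \<Omega> \<and> y \<in> \<Omega> \<and>
     (x = y \<or> (\<exists>j<length x. (\<forall>i<j. x ! i = y ! i) \<and> x ! j < y ! j))}"

definition high_lex :: "real list set \<Rightarrow> (real list \<times> real list) set" where
  "high_lex \<Omega> = {(x, y). x \<in> \<Omega> \<and> y \<in> \<Omega> \<and>
     (x = y \<or> (\<exists>j<length x. (\<forall>i. j < i \<and> i < length x \<longrightarrow> x ! i = y ! i) \<and> x ! j < y ! j))}"

end

theory Submission
  imports Defs
begin

theorem theorem3:
  fixes S :: "real set" and n :: nat and T :: "(real list \<times> real list) set" and s :: real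
  assumes "finite S"
    and "linear_order_on (samples S n) T"
    and "monotone_order (samples S n) T"
    and "s \<in> S"
  shows "upper_set (samples S n) (replicate n s) (low_lex (samples S n))
           \<subseteq> upper_set (samples S n) (replicate n s) T
       \<and> upper_set (samples S n) (replicate n s) T
           \<subseteq> upper_set (samples S n) (replicate n s) (high_lex (samples S n))"
proof -
  let ?O = "samples S n"
  let ?x = "replicate n s"
  have xO: "?x \<in> ?O" using assms(4) by (auto simp: samples_def)
  have refl: "refl_on ?O T" and anti: "antisym T"
    using assms(2) unfolding linear_order_on_def partial_order_on_def preorder_on_def by auto
  have mono: "\<And>a b. a \<in> ?O \<Longrightarrow> b \<in> ?O \<Longrightarrow> sample_le a b \<Longrightarrow> (a, b) \<in> T"
    using assms(3) unfolding monotone_order_def by blast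
  have A: "(?x, y) \<in> T" if yO: "y \<in> ?O" and L: "(?x, y) \<in> low_lex ?O" for y
  proof (cases "y = ?x")
    case True then show ?thesis using refl xO by (simp add: refl_onD)
  next
    case False
    then obtain j where j: "j < n" "\<forall>i<j. s = y ! i" "s < y ! j"
      using L by (auto simp: low_lex_def)
    have ly: "length y = n" "sorted y" using yO by (auto simp: samples_def)
    have "sample_le ?x y"
      unfolding sample_le_def
    proof (intro conjI allI impI)
      show "length ?x = length y" using ly by simp
      fix i assume i: "i < length ?x"
      show "?x ! i \<le> y ! i"
      proof (cases "i < j")
        case True then show ?thesis using j i by simp
      next
        case False
        then have "y ! j \<le> y ! i" using ly i by (simp add: sorted_nth_mono)
        then show ?thesis using j i by simp
      qed
    qed
    then show ?thesis using mono xO yO by blast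
  qed
  have B: "(?x, y) \<in> high_lex ?O" if yO: "y \<in> ?O" and T: "(?x, y) \<in> T" for y
  proof (cases "y = ?x")
    case True then show ?thesis using xO by (simp add: high_lex_def)
  next
    case False
    have ly: "length y = n" "sorted y" using yO by (auto simp: samples_def)
    have ex: "\<exists>i. i < n \<and> y ! i \<noteq> s"
    proof (rule ccontr)
      assume "\<not> ?thesis"
      then have "y = ?x" using ly by (intro nth_equalityI) auto
      then show False using False by simp
    qed
    define j where "j = (GREATEST i. i < n \<and> y ! i \<noteq> s)"
    have bnd: "\<forall>i. i < n \<and> y ! i \<noteq> s \<longrightarrow> i \<le> n" by auto
    have jP: "j < n \<and> y ! j \<noteq> s" unfolding j_def
      using ex by (rule GreatestI_ex_nat[OF _ bnd[rule_format]]) 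
    have jG: "\<And>i. j < i \<Longrightarrow> i < n \<Longrightarrow> y ! i = s"
    proof (rule ccontr)
      fix i assume "j < i" "i < n" "y ! i \<noteq> s"
      then have "i \<le> j" unfolding j_def using Greatest_le_nat[of "\<lambda>i. i < n \<and> y ! i \<noteq> s" i n] by auto
      then show False using \<open>j < i\<close> by simp
    qed
    show ?thesis
    proof (cases "s < y ! j")
      case True
      then show ?thesis using jP jG xO yO by (auto simp: high_lex_def)
    next
      case False
      then have lt: "y ! j < s" using jP by auto
      have "sample_le y ?x"
        unfolding sample_le_def
      proof (intro conjI allI impI)
        show "length y = length ?x" using ly by simp
        fix i assume i: "i < length y"
        show "y ! i \<le> ?x ! i"
        proof (cases "j < i")
          case True then show ?thesis using jG i ly by simp
        next
          case False
          then have "y ! i \<le> y ! j" using ly jP by (simp add: sorted_nth_mono)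
          then show ?thesis using lt i ly by simp
        qed
      qed
      then have "(y, ?x) \<in> T" using mono xO yO by blast
      then have "y = ?x" using anti T by (simp add: antisym_def)
      then show ?thesis using False by (simp add: \<open>y \<noteq> ?x\<close>)
    qed
  qed
  show ?thesis using A B by (auto simp: upper_set_def)
qed

end
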